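(* Let $\ell_1,\ell_2$ be two perpendicular lines in the hyperbolic plane crossing at a point $x$, dividing the plane into four quadrants. Then for every point $p$ in one quadrant and every point $q$ in the opposite quadrant, the hyperbolic geodesic segment from $p$ to $q$ passes within hyperbolic distance $\ln(1+\sqrt{2})$ of $x$.
   Context: The hyperbolic plane is the complete simply connected Riemannian surface of constant curvature $-1$; lines are complete geodesics. Two quadrants are opposite if they share only the point $x$. *)

theory Defs
  imports "HOL-Analysis.Analysis"
begin

text \<open>Hyperboloid model of the hyperbolic plane in Minkowski space R^(2,1).\<close>

definition mink :: "real^3 \<Rightarrow> real^3 \<Rightarrow> real" where
  "mink u v = u$1 * v$1 + u$2 * v$2 - u$3 * v$3"

definition hyp :: "(real^3) set" where
  "hyp = {z. mink z z = -1 \<and> z$3 > 0}"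

definition hdist :: "real^3 \<Rightarrow> real^3 \<Rightarrow> real" where
  "hdist p q = arcosh (- mink p q)"

text \<open>Lines (complete geodesics): intersections of hyp with planes through 0
  having spacelike normal n.\<close>
definition hline :: "real^3 \<Rightarrow> (real^3) set" where
  "hline n = {z \<in> hyp. mink z n = 0}"

definition spacelike :: "real^3 \<Rightarrow> bool" where
  "spacelike n \<longleftrightarrow> mink n n > 0"

definition hsegment :: "real^3 \<Rightarrow> real^3 \<Rightarrow> (real^3) set" where
  "hsegment p q = {z \<in> hyp. \<exists>a b. a \<ge> 0 \<and> b \<ge> 0 \<and> z = a *\<^sub>R p + b *\<^sub>R q}"

text \<open>Closed quadrant cut out by lines hline n1, hline n2 on the sides given by the normals;
  the opposite quadrant is quadrant (-n1) (-n2).\<close>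
definition quadrant :: "real^3 \<Rightarrow> real^3 \<Rightarrow> (real^3) set" where
  "quadrant n1 n2 = {z \<in> hyp. mink z n1 \<ge> 0 \<and> mink z n2 \<ge> 0}"

end

theory Submission
  imports Defs
begin

lemma frame:
  fixes e1 e2 e3 z w :: "real^3"
  assumes "mink e1 e1 = 1" "mink e2 e2 = 1" "mink e3 e3 = -1"
    "mink e1 e2 = 0" "mink e1 e3 = 0" "mink e2 e3 = 0"
  shows "mink z w = mink z e1 * mink w e1 + mink z e2 * mink w e2 - mink z e3 * mink w e3"
proof -
  define eta :: "3 \<Rightarrow> real" where "eta = (\<lambda>k. if k = 3 then -1 else 1)"
  define F :: "real^3^3" where "F = vector [e1, e2, e3]"
  define G :: "real^3^3" where "G = (\<chi> k j. eta k * F$j$k * eta j)"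
  have "F ** G = mat 1"
    using assms
    by (simp add: vec_eq_iff forall_3 matrix_matrix_mult_def sum_3 F_def G_def eta_def mat_def mink_def
      algebra_simps)
  hence "G ** F = mat 1" using matrix_left_right_inverse by blast
  hence E: "\<And>k l. (G ** F)$k$l = (mat 1 :: real^3^3)$k$l" by simp
  have E11: "e1$1*e1$1 + e2$1*e2$1 - e3$1*e3$1 = 1" using E[of 1 1]
    by (simp add: matrix_matrix_mult_def sum_3 F_def G_def eta_def mat_def algebra_simps)
  have E22: "e1$2*e1$2 + e2$2*e2$2 - e3$2*e3$2 = 1" using E[of 2 2]
    by (simp add: matrix_matrix_mult_def sum_3 F_def G_def eta_def mat_def algebra_simps)
  have E33: "e1$3*e1$3 + e2$3*e2$3 - e3$3*e3$3 = -1" using E[of 3 3]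
    by (simp add: matrix_matrix_mult_def sum_3 F_def G_def eta_def mat_def algebra_simps)
  have E12: "e1$1*e1$2 + e2$1*e2$2 - e3$1*e3$2 = 0" using E[of 1 2]
    by (simp add: matrix_matrix_mult_def sum_3 F_def G_def eta_def mat_def algebra_simps)
  have E13: "e1$1*e1$3 + e2$1*e2$3 - e3$1*e3$3 = 0" using E[of 1 3]
    by (simp add: matrix_matrix_mult_def sum_3 F_def G_def eta_def mat_def algebra_simps)
  have E23: "e1$2*e1$3 + e2$2*e2$3 - e3$2*e3$3 = 0" using E[of 2 3]
    by (simp add: matrix_matrix_mult_def sum_3 F_def G_def eta_def mat_def algebra_simps)
  have "mink z e1 * mink w e1 + mink z e2 * mink w e2 - mink z e3 * mink w e3
     = z$1*w$1*(e1$1*e1$1 + e2$1*e2$1 - e3$1*e3$1) + z$2*w$2*(e1$2*e1$2 + e2$2*e2$2 - e3$2*e3$2)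
       + z$3*w$3*(e1$3*e1$3 + e2$3*e2$3 - e3$3*e3$3)
       + (z$1*w$2 + z$2*w$1) * (e1$1*e1$2 + e2$1*e2$2 - e3$1*e3$2)
       - (z$1*w$3 + z$3*w$1) * (e1$1*e1$3 + e2$1*e2$3 - e3$1*e3$3)
       - (z$2*w$3 + z$3*w$2) * (e1$2*e1$3 + e2$2*e2$3 - e3$2*e3$3)"
    by (simp add: mink_def algebra_simps)
  also have "\<dots> = mink z w" by (simp add: E11 E22 E33 E12 E13 E23 mink_def)
  finally show ?thesis by simp
qed

lemma mink_neg:
  assumes "z \<in> hyp" "x \<in> hyp" shows "mink z x < 0"
proof -
  have z: "z$1^2 + z$2^2 = z$3^2 - 1" "z$3 > 0" using assms(1) by (auto simp: hyp_def mink_def power2_eq_square)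
  have x: "x$1^2 + x$2^2 = x$3^2 - 1" "x$3 > 0" using assms(2) by (auto simp: hyp_def mink_def power2_eq_square)
  have id: "(z$1^2 + z$2^2) * (x$1^2 + x$2^2) - (z$1*x$1 + z$2*x$2)^2 = (z$1*x$2 - z$2*x$1)^2"
    by (simp add: power2_eq_square algebra_simps)
  have cs: "(z$1*x$1 + z$2*x$2)^2 \<le> (z$1^2 + z$2^2) * (x$1^2 + x$2^2)"
    using id by (metis diff_ge_0_iff_ge zero_le_power2)
  have z1: "z$3^2 \<ge> 1" using z(1) by (smt (verit) zero_le_power2)
  have x1: "x$3^2 \<ge> 1" using x(1) by (smt (verit) zero_le_power2)
  have "(z$1^2 + z$2^2) * (x$1^2 + x$2^2) = z$3^2 * x$3^2 - z$3^2 - x$3^2 + 1"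
    unfolding z(1) x(1) by (simp add: algebra_simps)
  also have "\<dots> < (z$3 * x$3)^2" using z1 x1 by (simp add: power_mult_distrib)
  finally have "(z$1*x$1 + z$2*x$2)^2 < (z$3 * x$3)^2" using cs by linarith
  hence "\<bar>z$1*x$1 + z$2*x$2\<bar> < \<bar>z$3 * x$3\<bar>" by (metis abs_le_square_iff not_le)
  hence "z$1*x$1 + z$2*x$2 < z$3 * x$3" using z x by simp
  thus ?thesis by (simp add: mink_def)
qed

lemma mink_simps:
  "mink (c *\<^sub>R u) v = c * mink u v" "mink u (c *\<^sub>R v) = c * mink u v"
  "mink (u + v) w = mink u w + mink v w" "mink u (v + w) = mink u v + mink u w"
  "mink (- u) v = - mink u v" "mink u (- v) = - mink u v"
  by (simp_all add: mink_def algebra_simps)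

lemma mink_sym: "mink u v = mink v u" by (simp add: mink_def algebra_simps)

lemma arcosh_bound:
  fixes t :: real assumes "1 \<le> t" "t \<le> sqrt 2"
  shows "arcosh t \<le> ln (1 + sqrt 2)"
proof -
  have "t^2 \<le> 2" using assms by (metis real_sqrt_le_iff real_sqrt_abs abs_of_nonneg order_trans zero_le_one)
  hence "sqrt (t^2 - 1) \<le> 1" by simp
  hence "t + sqrt (t^2 - 1) \<le> 1 + sqrt 2" using assms by linarith
  moreover have "1 \<le> t^2" using assms by (simp add: one_le_power)
  hence "0 \<le> sqrt (t^2 - 1)" by simp
  hence "0 < t + sqrt (t^2 - 1)" using assms by linarith
  ultimately show ?thesis using assms by (simp add: arcosh_real_def)
qed

theorem lemma9:
  fixes n1 n2 x p q :: "real^3"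
  assumes "spacelike n1" and "spacelike n2"
    and "mink n1 n2 = 0"
    and "x \<in> hline n1" and "x \<in> hline n2"
    and "p \<in> quadrant n1 n2" and "q \<in> quadrant (-n1) (-n2)"
  shows "\<exists>z \<in> hsegment p q. hdist z x \<le> ln (1 + sqrt 2)"
proof -
  have N1: "mink n1 n1 > 0" and N2: "mink n2 n2 > 0" using assms(1,2) by (auto simp: spacelike_def)
  define e1 where "e1 = (1 / sqrt (mink n1 n1)) *\<^sub>R n1"
  define e2 where "e2 = (1 / sqrt (mink n2 n2)) *\<^sub>R n2"
  have xh: "x \<in> hyp" "mink x n1 = 0" "mink x n2 = 0" using assms(4,5) by (auto simp: hline_def)
  have xx: "mink x x = -1" using xh(1) by (simp add: hyp_def)
  have ee1: "mink e1 e1 = 1" using N1 by (simp add: e1_def mink_simps)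
  have ee2: "mink e2 e2 = 1" using N2 by (simp add: e2_def mink_simps)
  have e12: "mink e1 e2 = 0" using assms(3) by (simp add: e1_def e2_def mink_simps)
  have e1x: "mink e1 x = 0" using xh by (simp add: e1_def mink_simps mink_sym[of n1 x])
  have e2x: "mink e2 x = 0" using xh by (simp add: e2_def mink_simps mink_sym[of n2 x])
  have ident: "\<And>z w. mink z w = mink z e1 * mink w e1 + mink z e2 * mink w e2 - mink z x * mink w x"
    by (rule frame[OF ee1 ee2 xx e12 e1x e2x])
  have hyp_t: "\<And>z. z \<in> hyp \<Longrightarrow> 1 \<le> - mink z x"
  proof -
    fix z assume z: "z \<in> hyp"
    have "-1 = (mink z e1)^2 + (mink z e2)^2 - (mink z x)^2"
      using ident[of z z] z by (simp add: hyp_def power2_eq_square)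
    hence "1 \<le> (- mink z x)^2" by (smt (verit) zero_le_power2 power2_minus)
    moreover have "0 < - mink z x" using mink_neg[OF z xh(1)] by simp
    ultimately show "1 \<le> - mink z x"
      using power2_le_imp_le[of 1 "- mink z x"] by simp
  qed
  have ph: "p \<in> hyp" "mink p n1 \<ge> 0" "mink p n2 \<ge> 0" using assms(6) by (auto simp: quadrant_def)
  have qh: "q \<in> hyp" "mink q n1 \<le> 0" "mink q n2 \<le> 0" using assms(7) by (auto simp: quadrant_def mink_simps)
  define a1 where "a1 = mink p e1"
  define a2 where "a2 = mink p e2"
  define b1 where "b1 = mink q e1"
  define b2 where "b2 = mink q e2"
  define c where "c = - mink p x"
  define d where "d = - mink q x"
  have a1: "a1 \<ge> 0" using ph N1 by (simp add: a1_def e1_def mink_simps)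
  have a2: "a2 \<ge> 0" using ph N2 by (simp add: a2_def e2_def mink_simps)
  have b1: "b1 \<le> 0" using qh N1 by (simp add: b1_def e1_def mink_simps divide_nonpos_pos)
  have b2: "b2 \<le> 0" using qh N2 by (simp add: b2_def e2_def mink_simps divide_nonpos_pos)
  have c1: "c \<ge> 1" using hyp_t[OF ph(1)] by (simp add: c_def)
  have d1: "d \<ge> 1" using hyp_t[OF qh(1)] by (simp add: d_def)
  have pp: "c^2 = 1 + a1^2 + a2^2"
    using ident[of p p] ph(1) by (simp add: hyp_def power2_eq_square a1_def a2_def c_def)
  have qq: "d^2 = 1 + b1^2 + b2^2"
    using ident[of q q] qh(1) by (simp add: hyp_def power2_eq_square b1_def b2_def d_def)
  have pq0: "mink p q = a1*b1 + a2*b2 - c*d"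
    using ident[of p q] by (simp add: a1_def a2_def b1_def b2_def c_def d_def)
  have "a1*b1 \<le> 0" "a2*b2 \<le> 0" using a1 a2 b1 b2 by (simp_all add: mult_nonneg_nonpos)
  hence pq: "mink p q \<le> - (c*d)" using pq0 by linarith
  have "\<exists>a b. a \<ge> 0 \<and> b \<ge> 0 \<and> p = a *\<^sub>R p + b *\<^sub>R q"
    by (rule exI[of _ 1], rule exI[of _ 0]) simp
  hence pmem: "p \<in> hsegment p q" using ph(1) by (simp add: hsegment_def)
  have "\<exists>a b. a \<ge> 0 \<and> b \<ge> 0 \<and> q = a *\<^sub>R p + b *\<^sub>R q"
    by (rule exI[of _ 0], rule exI[of _ 1]) simp
  hence qmem: "q \<in> hsegment p q" using qh(1) by (simp add: hsegment_def)
  show ?thesis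
  proof (cases "c^2 \<le> 2")
    case True
    hence "c \<le> sqrt 2" by (rule real_le_rsqrt)
    hence "hdist p x \<le> ln (1 + sqrt 2)" using c1 arcosh_bound by (simp add: hdist_def c_def)
    thus ?thesis using pmem by blast
  next
    case cF: False
    show ?thesis
    proof (cases "d^2 \<le> 2")
      case True
      hence "d \<le> sqrt 2" by (rule real_le_rsqrt)
      hence "hdist q x \<le> ln (1 + sqrt 2)" using d1 arcosh_bound by (simp add: hdist_def d_def)
      thus ?thesis using qmem by blast
    next
      case dF: False
      define C where "C = c^2 - 2"
      define D where "D = d^2 - 2"
      have C0: "C > 0" "D > 0" using cF dF by (simp_all add: C_def D_def)
      define l where "l = sqrt D"
      define m where "m = sqrt C"
      have lm: "l > 0" "m > 0" "l^2 = D" "m^2 = C" using C0 by (simp_all add: l_def m_def)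
      define w where "w = l *\<^sub>R p + m *\<^sub>R q"
      have ww: "mink w w = 2*l*m * mink p q - l^2 - m^2"
        using ph(1) qh(1) by (simp add: w_def mink_simps mink_sym[of q p] hyp_def power2_eq_square algebra_simps)
      have wx: "- mink w x = l*c + m*d" by (simp add: w_def mink_simps c_def d_def)
      have lmpos: "l*m > 0" using lm by simp
      have ww2: "- mink w w \<ge> l^2 + m^2 + 2*l*m*(c*d)"
        using ww pq lmpos mult_left_mono[OF pq, of "2*l*m"] by (simp add: algebra_simps)
      have cdpos: "c*d > 0" using c1 d1 by simp
      have wwpos: "- mink w w > 0"
        proof -
        have "0 < l^2" "0 \<le> m^2" "0 < 2*l*m*(c*d)" using lm cdpos C0 by simp_all
        thus ?thesis using ww2 by linarith
      qed
      have CD: "C*D \<le> (c*d)^2" using C0 by (simp add: C_def D_def power_mult_distrib mult_mono)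
      have lmCD: "l*m = sqrt (C*D)" by (simp add: l_def m_def real_sqrt_mult mult.commute)
      have sq: "sqrt (C*D) \<le> c*d" using CD cdpos by (simp add: real_le_lsqrt)
      have CDeq: "C*D = sqrt (C*D) * sqrt (C*D)" using C0 by simp
      have "C*D \<le> l*m*(c*d)" unfolding lmCD using CDeq mult_left_mono[OF sq, of "sqrt (C*D)"] by simp
      hence key: "(l*c + m*d)^2 \<le> 2 * (- mink w w)"
      proof -
        have cc: "c^2 = C+2" "d^2 = D+2" by (simp_all add: C_def D_def)
        have "(l*c+m*d)^2 = l^2*c^2 + m^2*d^2 + 2*l*m*(c*d)" by (simp add: power2_eq_square algebra_simps)
        also have "\<dots> = 2*l^2 + 2*m^2 + 2*(C*D) + 2*l*m*(c*d)" unfolding cc lm(3,4) by (simp add: algebra_simps)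
        finally show ?thesis using ww2 \<open>C*D \<le> l*m*(c*d)\<close> by linarith
      qed
      define r where "r = sqrt (- mink w w)"
      have r: "r > 0" "r^2 = - mink w w" using wwpos by (simp_all add: r_def)
      define z where "z = (1/r) *\<^sub>R w"
      have zz: "mink z z = -1" using r wwpos by (simp add: z_def mink_simps power2_eq_square)
      have z3: "z$3 > 0"
      proof -
        have "p$3 > 0" "q$3 > 0" using ph(1) qh(1) by (simp_all add: hyp_def)
        hence "l * p$3 + m * q$3 > 0" using lm by (simp add: add_pos_pos)
        thus ?thesis using r by (simp add: z_def w_def)
      qed
      have zhyp: "z \<in> hyp" using zz z3 by (simp add: hyp_def)
      have zeq: "z = (l/r) *\<^sub>R p + (m/r) *\<^sub>R q" by (simp add: z_def w_def scaleR_add_right)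
      have "\<exists>a b. a \<ge> 0 \<and> b \<ge> 0 \<and> z = a *\<^sub>R p + b *\<^sub>R q"
        by (rule exI[of _ "l/r"], rule exI[of _ "m/r"]) (use zeq r lm in simp)
      hence zmem: "z \<in> hsegment p q" using zhyp by (simp add: hsegment_def)
      define t where "t = - mink z x"
      have teq: "t = (l*c + m*d) / r" proof -
        have "t = - mink w x / r" by (simp add: t_def z_def mink_simps)
        thus ?thesis using wx by simp
      qed
      have t1: "1 \<le> t" using hyp_t[OF zhyp] by (simp add: t_def)
      have "t^2 = (l*c + m*d)^2 / r^2" by (simp add: teq power_divide)
      also have "\<dots> \<le> 2" unfolding r(2) using key wwpos by (subst pos_divide_le_eq) simp_all
      finally have "t \<le> sqrt 2" by (rule real_le_rsqrt)
      hence "hdist z x \<le> ln (1 + sqrt 2)" using t1 arcosh_bound by (simp add: hdist_def t_def)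
      thus ?thesis using zmem by blast
    qed
  qed
qed

end
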